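(* Let $M\ge 2N-1$. For a generic $N$-dimensional subspace $W\subset\mathbb R^M$ (i.e. all $W$ in a Zariski open dense subset of the Grassmannian $Gr(N,M)$) the following holds: for every $S\subset\{1,\dots,M\}$ and every $u\in W$, one has $\sigma_S(u)\in W$ if and only if $\sigma_S(u)=\pm u$.
   Context: For $S\subset\{1,\dots,M\}$ with characteristic function $S(i)$ ($S(i)=1$ if $i\in S$, $0$ otherwise), $\sigma_S:\mathbb R^M\to\mathbb R^M$ is $\sigma_S(a_1,\dots,a_M)=((-1)^{S(1)}a_1,\dots,(-1)^{S(M)}a_M)$. *)

theory Defs
  imports "HOL-Analysis.Analysis"
begin

inductive matrix_poly_fun :: "(real^'n^'m \<Rightarrow> real) \<Rightarrow> bool" where
  const: "matrix_poly_fun (\<lambda>A. c)"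
| coord: "matrix_poly_fun (\<lambda>A. A $ i $ j)"
| add: "matrix_poly_fun p \<Longrightarrow> matrix_poly_fun q \<Longrightarrow> matrix_poly_fun (\<lambda>A. p A + q A)"
| mult: "matrix_poly_fun p \<Longrightarrow> matrix_poly_fun q \<Longrightarrow> matrix_poly_fun (\<lambda>A. p A * q A)"

definition sigma :: "'m set \<Rightarrow> real^'m \<Rightarrow> real^'m" where
  "sigma S u = (\<chi> i. if i \<in> S then - (u $ i) else u $ i)"

end

theory Submission
  imports Defs "HOL-Computational_Algebra.Polynomial"
begin

lemma mpf_sum:
  assumes "finite I" "\<And>k. k \<in> I \<Longrightarrow> matrix_poly_fun (f k)"
  shows "matrix_poly_fun (\<lambda>A. \<Sum>k\<in>I. f k A)"
  using assms
proof (induction I rule: finite_induct)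
  case empty
  then show ?case using matrix_poly_fun.const[of 0] by simp
next
  case (insert x F)
  then show ?case by (simp add: matrix_poly_fun.add)
qed

lemma mpf_prod:
  assumes "finite I" "\<And>k. k \<in> I \<Longrightarrow> matrix_poly_fun (f k)"
  shows "matrix_poly_fun (\<lambda>A. \<Prod>k\<in>I. f k A)"
  using assms
proof (induction I rule: finite_induct)
  case empty
  then show ?case using matrix_poly_fun.const[of 1] by simp
next
  case (insert x F)
  then show ?case by (simp add: matrix_poly_fun.mult)
qed

definition minor :: "real^'n^'m \<Rightarrow> ('n \<Rightarrow> 'm) \<Rightarrow> real^'n^'n" where
  "minor A r = (\<chi> i j. A $ r i $ j)"

definition Pm :: "real^'n::finite^'m::finite \<Rightarrow> real" where
  "Pm A = (\<Prod>r \<in> {r::'n \<Rightarrow> 'm. inj r}. det (minor A r))"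

lemma mpf_Pm: "matrix_poly_fun (Pm :: real^'n::finite^'m::finite \<Rightarrow> real)"
proof -
  have "matrix_poly_fun (\<lambda>A. det (minor A r))" for r :: "'n::finite \<Rightarrow> 'm::finite"
  proof -
    have e: "(\<lambda>A. det (minor A r)) = (\<lambda>A. \<Sum>p\<in>{p. p permutes (UNIV::'n set)}.
       of_int (sign p) * (\<Prod>i\<in>UNIV. A $ r i $ p i))"
      by (simp add: det_def minor_def)
    show ?thesis unfolding e
      by (intro mpf_sum matrix_poly_fun.mult matrix_poly_fun.const mpf_prod matrix_poly_fun.coord) auto
  qed
  then show ?thesis unfolding Pm_def[abs_def] by (intro mpf_prod) auto
qed

lemma minor_kernel:
  fixes A :: "real^'n::finite^'m::finite"
  assumes "Pm A \<noteq> 0" "card T \<ge> CARD('n)" "\<forall>i\<in>T. (A *v z) $ i = 0"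
  shows "z = 0"
proof -
  obtain r :: "'n \<Rightarrow> 'm" where r: "r ` UNIV \<subseteq> T" "inj_on r UNIV"
    using card_le_inj[of "UNIV::'n set" T] assms(2) by auto
  have "det (minor A r) \<noteq> 0" using assms(1) r(2) unfolding Pm_def by auto
  hence inv: "invertible (minor A r)" by (simp add: invertible_det_nz)
  have "minor A r *v z = 0" using r assms(3)
    by (auto simp: vec_eq_iff minor_def matrix_vector_mult_def)
  then show "z = 0" using inj_matrix_vector_mult[OF inv]
    by (metis matrix_vector_mult_0_right injD)
qed

lemma Pm_nonzero: "\<exists>A0::real^'n::finite^'m::finite. Pm A0 \<noteq> 0"
proof -
  obtain e :: "'n \<Rightarrow> nat" where e: "bij_betw e UNIV {0..<CARD('n)}"
    using ex_bij_betw_finite_nat[of "UNIV::'n set"] by auto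
  obtain h :: "'m \<Rightarrow> nat" where h: "bij_betw h UNIV {0..<CARD('m)}"
    using ex_bij_betw_finite_nat[of "UNIV::'m set"] by auto
  define t where "t i = real (h i)" for i
  have tinj: "inj t" using h by (auto simp: bij_betw_def inj_def t_def)
  have einj: "inj e" using e by (auto simp: bij_betw_def)
  have elt: "e j < CARD('n)" for j using e by (auto simp: bij_betw_def)
  define A0 :: "real^'n^'m" where "A0 = (\<chi> i j. t i ^ e j)"
  have "det (minor A0 r) \<noteq> 0" if rinj: "inj r" for r
  proof -
    have ker: "z = 0" if z: "minor A0 r *v z = 0" for z
    proof -
      define q where "q = (\<Sum>j\<in>UNIV. monom (z$j) (e j))"
      have roots: "poly q (t (r i)) = 0" for i
      proof -
        have "poly q (t (r i)) = (minor A0 r *v z) $ i"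
          by (simp add: q_def poly_sum poly_monom minor_def A0_def matrix_vector_mult_def mult.commute)
        then show ?thesis using z by simp
      qed
      have q0: "q = 0"
      proof (rule ccontr)
        assume qn: "q \<noteq> 0"
        have "degree q \<le> CARD('n) - 1" unfolding q_def
          proof (intro degree_sum_le)
          fix j
          show "degree (monom (z $ j) (e j)) \<le> CARD('n) - 1"
            using degree_monom_le[of "z$j" "e j"] elt[of j] by linarith
        qed simp
        moreover have "card ((t \<circ> r) ` UNIV) = CARD('n)"
          using card_image[OF inj_compose[OF tinj rinj]] by simp
        moreover have "card ((t \<circ> r) ` UNIV) \<le> card {x. poly q x = 0}"
          using roots qn by (intro card_mono poly_roots_finite) auto
        moreover have "card {x. poly q x = 0} \<le> degree q" using qn by (rule card_poly_roots_bound)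
        moreover have "CARD('n) > 0" by simp
        ultimately show False by linarith
      qed
      show "z = 0"
      proof (rule vec_eq_iff[THEN iffD2], intro allI)
        fix j
        have "coeff q (e j) = (\<Sum>j'\<in>UNIV. if j' = j then z$j' else 0)"
          unfolding q_def coeff_sum coeff_monom using einj by (intro sum.cong) (auto simp: inj_eq)
        also have "\<dots> = z$j" by simp
        finally show "z$j = 0 $ j" using q0 by simp
      qed
    qed
    have "inj ((*v) (minor A0 r))"
    proof (rule injI)
      fix x y assume "minor A0 r *v x = minor A0 r *v y"
      hence "minor A0 r *v (x - y) = 0" by (simp add: matrix_vector_mult_diff_distrib)
      thus "x = y" using ker[of "x - y"] by simp
    qed
    then show ?thesis using det_nz_iff_inj[of "(*v) (minor A0 r)"] by simp
  qed
  then have "Pm A0 \<noteq> 0" unfolding Pm_def by auto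
  then show ?thesis by blast
qed

lemma mvm_neg: "(A::real^'n::finite^'m::finite) *v (- x) = - (A *v x)"
  by (simp add: vec_eq_iff matrix_vector_mult_def sum_negf)

theorem lemma2p3:
  assumes "CARD('m::finite) + 1 \<ge> 2 * CARD('n::finite)"
  shows "\<exists>P :: real^'n^'m \<Rightarrow> real. matrix_poly_fun P \<and> (\<exists>A0. P A0 \<noteq> 0) \<and>
     (\<forall>A. P A \<noteq> 0 \<longrightarrow> rank A = CARD('n) \<and>
        (\<forall>(S :: 'm set) u. u \<in> range (\<lambda>x. A *v x) \<longrightarrow>
            (sigma S u \<in> range (\<lambda>x. A *v x) \<longleftrightarrow> sigma S u = u \<or> sigma S u = - u)))"
proof (rule exI[of _ Pm], intro conjI allI impI)
  show "matrix_poly_fun (Pm :: real^'n^'m \<Rightarrow> real)" by (rule mpf_Pm)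
  show "\<exists>A0::real^'n^'m. Pm A0 \<noteq> 0" by (rule Pm_nonzero)
  fix A :: "real^'n^'m"
  assume P: "Pm A \<noteq> 0"
  have npos: "CARD('n) > 0" by simp
  have MN: "CARD('m) \<ge> CARD('n)" using assms npos by linarith
  have inj: "inj ((*v) A)"
  proof (rule injI)
    fix x y assume "A *v x = A *v y"
    hence "A *v (x - y) = 0" by (simp add: matrix_vector_mult_diff_distrib)
    hence "x - y = 0" using minor_kernel[OF P, of UNIV "x - y"] MN by simp
    thus "x = y" by simp
  qed
  show "rank A = CARD('n)"
  proof -
    have l: "linear ((*v) A)" by (simp add: matrix_vector_mul_linear)
    have "aff_dim (range ((*v) A)) = aff_dim (UNIV :: (real^'n) set)"
      using aff_dim_injective_linear_image[OF l inj] by blast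
    moreover have "subspace (range ((*v) A))" by (simp add: l linear_subspace_image)
    ultimately have "int (dim (range ((*v) A))) = int (CARD('n))"
      by (simp add: aff_dim_subspace)
    then show ?thesis by (simp add: rank_dim_range)
  qed
  fix S :: "'m set" and u :: "real^'m"
  assume "u \<in> range (\<lambda>x. A *v x)"
  then obtain x where x: "u = A *v x" by auto
  show "sigma S u \<in> range (\<lambda>x. A *v x) \<longleftrightarrow> sigma S u = u \<or> sigma S u = - u"
  proof
    assume "sigma S u \<in> range (\<lambda>x. A *v x)"
    then obtain y where y: "sigma S u = A *v y" by auto
    have yi: "(A *v y) $ i = (if i \<in> S then - u$i else u$i)" for i
      using y[symmetric] by (simp add: sigma_def)
    have xi: "(A *v x) $ i = u $ i" for i using x by simp
    have a: "\<forall>i\<in>S. (A *v (x + y)) $ i = 0"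
      by (simp add: matrix_vector_right_distrib xi yi)
    have b: "\<forall>i\<in>-S. (A *v (x - y)) $ i = 0"
      by (simp add: matrix_vector_mult_diff_distrib xi yi)
    have cS: "card S + card (-S) = CARD('m)"
      using card_Un_disjoint[of S "-S"] by (simp add: Un_commute)
    consider "card S \<ge> CARD('n)" | "card (-S) \<ge> CARD('n)" using cS assms by linarith
    then show "sigma S u = u \<or> sigma S u = - u"
    proof cases
      case 1
      then have "x + y = 0" using minor_kernel[OF P 1 a] by simp
      then have "y = - x" by (simp add: add_eq_0_iff)
      then show ?thesis using x y by (simp add: mvm_neg)
    next
      case 2
      then have "x - y = 0" using minor_kernel[OF P 2 b] by simp
      then show ?thesis using x y by simp
    qed
  next
    assume "sigma S u = u \<or> sigma S u = - u"
    then show "sigma S u \<in> range (\<lambda>x. A *v x)"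
    proof
      assume "sigma S u = u" then show ?thesis using x by auto
    next
      assume "sigma S u = - u"
      then have "sigma S u = A *v (- x)" using x by (simp add: mvm_neg)
      then show ?thesis by auto
    qed
  qed
qed

end
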